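(* Let $\Omega=\mathbb{Z}_d^4$ or $\mathbb{R}^4$ be the ontic state space of an information system $S$ and a memory system $M$, with coordinates $(q_S,p_S,q_M,p_M)$. Let the initial epistemic state of $S$ be $(\langle \vec v_1\rangle,\vec v)$ with $\vec v_1=(v_1^1,v_1^2)^T$, $\vec v=(v^1,v^2)^T\in\mathbb{Z}_d^2$ or $\mathbb{R}^2$, and let the memory be initialized with known position $q_M=0$, so the initial joint state is $$\Big(\Big\langle (v_1^1,v_1^2,0,0)^T,(0,0,1,0)^T\Big\rangle,\ (v^1,v^2,0,0)^T\Big).$$ Let $$\Sigma=\begin{pmatrix}1&0&0&0\\0&1&0&-1\\1&0&1&0\\0&0&0&1\end{pmatrix}.$$ Then applying the transformation $\Sigma$ correlates the position of the memory with the position of the information system: in the final state, $q_M=q_S$ holds for every compatible ontic state. Moreover, if $d$ is prime or the systems are continuous, the marginal of the final state on $S$ (obtained by tracing out the memory) is the mixture of the post-measurement states of $S$ corresponding to all possible outcomes (those with nonzero probability) of a position measurement $\langle(1,0)^T\rangle$ on the initial state of $S$.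
   Context: Toy theory (quadrature formalism): ontic states $\vec m\in\Omega$; an observable $\vec f\in\Omega$ takes value $\vec f^T\vec m$. Poisson bracket $[\vec f,\vec g]=\sum_i(f_{2i-1}g_{2i}-f_{2i}g_{2i-1})$. A valid epistemic state $(V,\vec v)$ has $V$ a subspace/submodule that is isotropic ($[\vec f,\vec g]=0$ on $V$); its compatible ontic states are $V^\perp+\vec v$ (with $V^\perp=\{\vec m:\vec f^T\vec m=0\ \forall\vec f\in V\}$), uniformly distributed. A reversible transformation is a symplectic matrix $\Sigma$ (preserving the Poisson bracket), acting on ontic states by $\vec m\mapsto\Sigma\vec m$ and on epistemic states by $(V,\vec v)\mapsto((\Sigma^T)^{-1}V,\Sigma\vec v)$. Tracing out a subsystem means taking the marginal of the uniform distribution on compatible ontic states (projection onto the remaining coordinates). A measurement is an isotropic $V_\pi$; outcome $\vec v_\pi$ corresponds to the cell $V_\pi^\perp+\vec v_\pi$. Post-measurement state (update rule): after obtaining $\vec v_\pi$ on $(V,\vec v)$ the state is $(V_\pi+V_{\text{commute}},\vec v')$ with $V_{\text{commute}}=\{\vec f\in V:[\vec f,\vec g]=0\ \forall\vec g\in V_\pi\}$ and $\vec v'\in(V_\pi^\perp+\vec v_\pi)\cap(V_{\text{commute}}^\perp+\vec v)$. A mixture of epistemic states means the uniform distribution over the union of their compatible ontic sets. *)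

theory Defs
  imports Main
begin

text \<open>Toy theory in the quadrature formalism, over an arbitrary commutative ring
  of coefficients (instances: the integers modulo d, the reals).  Coordinates are 0-indexed:
  index 2k is q of the k-th subsystem, index 2k+1 is p of the k-th subsystem.
  For S (system 0) and M (system 1): indices 0,1,2,3 are q_S, p_S, q_M, p_M.\<close>

definition omega :: "nat \<Rightarrow> (nat \<Rightarrow> 'a::comm_ring_1) set" where
  "omega n = {m. \<forall>i\<ge>2*n. m i = 0}"

definition obs_val :: "nat \<Rightarrow> (nat \<Rightarrow> 'a::comm_ring_1) \<Rightarrow> (nat \<Rightarrow> 'a) \<Rightarrow> 'a" where
  "obs_val n f m = (\<Sum>i<2*n. f i * m i)"

definition pbracket :: "nat \<Rightarrow> (nat \<Rightarrow> 'a::comm_ring_1) \<Rightarrow> (nat \<Rightarrow> 'a) \<Rightarrow> 'a" where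
  "pbracket n f g = (\<Sum>i<n. f (2*i) * g (2*i+1) - f (2*i+1) * g (2*i))"

definition vec2 :: "'a::comm_ring_1 \<Rightarrow> 'a \<Rightarrow> nat \<Rightarrow> 'a" where
  "vec2 a b = (\<lambda>i. if i = 0 then a else if i = 1 then b else 0)"

definition vec4 :: "'a::comm_ring_1 \<Rightarrow> 'a \<Rightarrow> 'a \<Rightarrow> 'a \<Rightarrow> nat \<Rightarrow> 'a" where
  "vec4 a b c d = (\<lambda>i. if i = 0 then a else if i = 1 then b else if i = 2 then c
                        else if i = 3 then d else 0)"

definition gen_span :: "(nat \<Rightarrow> 'a::comm_ring_1) list \<Rightarrow> (nat \<Rightarrow> 'a) set" where
  "gen_span xs = {(\<lambda>i. \<Sum>j<length xs. c j * (xs ! j) i) | c. True}"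

definition perp :: "nat \<Rightarrow> (nat \<Rightarrow> 'a::comm_ring_1) set \<Rightarrow> (nat \<Rightarrow> 'a) set" where
  "perp n V = {m \<in> omega n. \<forall>f\<in>V. obs_val n f m = 0}"

definition isotropic :: "nat \<Rightarrow> (nat \<Rightarrow> 'a::comm_ring_1) set \<Rightarrow> bool" where
  "isotropic n V = (\<forall>f\<in>V. \<forall>g\<in>V. pbracket n f g = 0)"

definition compat :: "nat \<Rightarrow> (nat \<Rightarrow> 'a::comm_ring_1) set \<Rightarrow> (nat \<Rightarrow> 'a) \<Rightarrow> (nat \<Rightarrow> 'a) set" where
  "compat n V v = {(\<lambda>i. x i + v i) | x. x \<in> perp n V}"

definition mat_vec :: "nat \<Rightarrow> (nat \<Rightarrow> nat \<Rightarrow> 'a::comm_ring_1) \<Rightarrow> (nat \<Rightarrow> 'a) \<Rightarrow> nat \<Rightarrow> 'a" where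
  "mat_vec n A m = (\<lambda>i. if i < 2*n then (\<Sum>j<2*n. A i j * m j) else 0)"

text \<open>Action of a reversible transformation on epistemic states:
  V maps to (A^T)^{-1} V, i.e. the preimage of V under A^T; v maps to A v.\<close>
definition transform_space :: "nat \<Rightarrow> (nat \<Rightarrow> nat \<Rightarrow> 'a::comm_ring_1) \<Rightarrow> (nat \<Rightarrow> 'a) set \<Rightarrow> (nat \<Rightarrow> 'a) set" where
  "transform_space n A V = {f \<in> omega n. mat_vec n (\<lambda>i j. A j i) f \<in> V}"

definition transform_vec :: "nat \<Rightarrow> (nat \<Rightarrow> nat \<Rightarrow> 'a::comm_ring_1) \<Rightarrow> (nat \<Rightarrow> 'a) \<Rightarrow> nat \<Rightarrow> 'a" where
  "transform_vec n A v = mat_vec n A v"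

definition sigmaC :: "nat \<Rightarrow> nat \<Rightarrow> 'a::comm_ring_1" where
  "sigmaC i j =
     (if (i, j) \<in> {(0,0), (1,1), (2,0), (2,2), (3,3)} then 1
      else if (i, j) = (1,3) then -1 else 0)"

definition ssum :: "(nat \<Rightarrow> 'a::comm_ring_1) set \<Rightarrow> (nat \<Rightarrow> 'a) set \<Rightarrow> (nat \<Rightarrow> 'a) set" where
  "ssum V W = {(\<lambda>i. a i + b i) | a b. a \<in> V \<and> b \<in> W}"

definition commuting_part :: "nat \<Rightarrow> (nat \<Rightarrow> 'a::comm_ring_1) set \<Rightarrow> (nat \<Rightarrow> 'a) set \<Rightarrow> (nat \<Rightarrow> 'a) set" where
  "commuting_part n V Vpi = {f \<in> V. \<forall>g\<in>Vpi. pbracket n f g = 0}"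

definition post_meas_compat ::
  "nat \<Rightarrow> (nat \<Rightarrow> 'a::comm_ring_1) set \<Rightarrow> (nat \<Rightarrow> 'a) \<Rightarrow> (nat \<Rightarrow> 'a) set \<Rightarrow> (nat \<Rightarrow> 'a) \<Rightarrow> (nat \<Rightarrow> 'a) set" where
  "post_meas_compat n Vpi vpi V v =
     (\<Union>v' \<in> compat n Vpi vpi \<inter> compat n (commuting_part n V Vpi) v.
        compat n (ssum Vpi (commuting_part n V Vpi)) v')"

text \<open>Outcomes with nonzero probability: the cell Vpi^perp + vpi meets the
  set of compatible ontic states.\<close>
definition possible_outcomes ::
  "nat \<Rightarrow> (nat \<Rightarrow> 'a::comm_ring_1) set \<Rightarrow> (nat \<Rightarrow> 'a) set \<Rightarrow> (nat \<Rightarrow> 'a) \<Rightarrow> (nat \<Rightarrow> 'a) set" where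
  "possible_outcomes n Vpi V v = {vpi \<in> omega n. compat n Vpi vpi \<inter> compat n V v \<noteq> {}}"

text \<open>Mixture of the post-measurement states over all possible outcomes:
  union of their compatible sets (support of the uniform distribution).\<close>
definition mixture_post_meas ::
  "nat \<Rightarrow> (nat \<Rightarrow> 'a::comm_ring_1) set \<Rightarrow> (nat \<Rightarrow> 'a) set \<Rightarrow> (nat \<Rightarrow> 'a) \<Rightarrow> (nat \<Rightarrow> 'a) set" where
  "mixture_post_meas n Vpi V v =
     (\<Union>vpi \<in> possible_outcomes n Vpi V v. post_meas_compat n Vpi vpi V v)"

definition trace_rest :: "nat \<Rightarrow> (nat \<Rightarrow> 'a::comm_ring_1) set \<Rightarrow> (nat \<Rightarrow> 'a) set" where
  "trace_rest k S = (\<lambda>m i. if i < 2*k then m i else 0) ` S"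

definition init_joint_space :: "(nat \<Rightarrow> 'a::comm_ring_1) \<Rightarrow> (nat \<Rightarrow> 'a) set" where
  "init_joint_space v1 = gen_span [vec4 (v1 0) (v1 1) 0 0, vec4 0 0 1 0]"

definition init_joint_vec :: "(nat \<Rightarrow> 'a::comm_ring_1) \<Rightarrow> nat \<Rightarrow> 'a" where
  "init_joint_vec v = vec4 (v 0) (v 1) 0 0"

end

theory Submission
  imports Defs
begin

lemma omega_iff: "m \<in> omega n \<longleftrightarrow> (\<forall>i\<ge>2*n. m i = 0)"
  by (simp add: omega_def)

lemma obs1: "obs_val 1 f m = f 0 * m 0 + f 1 * m 1"
  by (simp add: obs_val_def eval_nat_numeral lessThan_Suc)

lemma obs1s: "obs_val (Suc 0) f m = f 0 * m 0 + f 1 * m 1"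
  using obs1 by simp

lemma pb1s: "pbracket (Suc 0) f g = f 0 * g 1 - f 1 * g 0"
  by (simp add: pbracket_def)

lemma obs2: "obs_val 2 f m = f 0 * m 0 + f 1 * m 1 + f 2 * m 2 + f 3 * m 3"
  by (simp add: obs_val_def eval_nat_numeral lessThan_Suc)

lemma pb1: "pbracket 1 f g = f 0 * g 1 - f 1 * g 0"
  by (simp add: pbracket_def)

lemma mv2: "i < 4 \<Longrightarrow> mat_vec 2 A m i = A i 0 * m 0 + A i 1 * m 1 + A i 2 * m 2 + A i 3 * m 3"
  by (simp add: mat_vec_def eval_nat_numeral lessThan_Suc)

lemma mv2': "\<not> i < 4 \<Longrightarrow> mat_vec 2 A m i = 0"
  by (simp add: mat_vec_def)

lemma gen_span1: "gen_span [x] = {(\<lambda>i. c * x i) | c. True}"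
  unfolding gen_span_def by auto

lemma gen_span2: "gen_span [x, y] = {(\<lambda>i. c0 * x i + c1 * y i) | c0 c1. True}"
proof (rule set_eqI, rule iffI)
  fix z assume "z \<in> gen_span [x, y]"
  then show "z \<in> {(\<lambda>i. c0 * x i + c1 * y i) | c0 c1. True}"
    unfolding gen_span_def by (auto simp: lessThan_Suc eval_nat_numeral add.commute)
next
  fix z assume "z \<in> {(\<lambda>i. c0 * x i + c1 * y i) | c0 c1. True}"
  then obtain c0 c1 where z: "z = (\<lambda>i. c0 * x i + c1 * y i)" by auto
  show "z \<in> gen_span [x, y]" unfolding gen_span_def z
    by (rule CollectI, rule exI[of _ "\<lambda>j. if j = 0 then c0 else c1"])
       (auto simp: lessThan_Suc eval_nat_numeral add.commute)
qed

lemma compat_mem: "m \<in> compat n V v \<longleftrightarrow> (\<lambda>i. m i - v i) \<in> perp n V"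
proof
  assume "m \<in> compat n V v"
  then obtain x where "x \<in> perp n V" "m = (\<lambda>i. x i + v i)" unfolding compat_def by auto
  then show "(\<lambda>i. m i - v i) \<in> perp n V" by simp
next
  assume "(\<lambda>i. m i - v i) \<in> perp n V"
  then show "m \<in> compat n V v" unfolding compat_def
    by (intro CollectI exI[of _ "\<lambda>i. m i - v i"]) auto
qed

lemma perp_mem: "x \<in> perp n V \<longleftrightarrow> x \<in> omega n \<and> (\<forall>f\<in>V. obs_val n f x = 0)"
  by (simp add: perp_def)

lemma sig: "sigmaC 0 0 = 1" "sigmaC (Suc 0) 0 = 0" "sigmaC 2 0 = 1" "sigmaC 3 0 = 0"
  "sigmaC 0 (Suc 0) = 0" "sigmaC (Suc 0) (Suc 0) = 1" "sigmaC 2 (Suc 0) = 0" "sigmaC 3 (Suc 0) = 0"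
  "sigmaC 0 2 = 0" "sigmaC (Suc 0) 2 = 0" "sigmaC 2 2 = 1" "sigmaC 3 2 = 0"
  "sigmaC 0 3 = 0" "sigmaC (Suc 0) 3 = -1" "sigmaC 2 3 = 0" "sigmaC 3 3 = 1"
  by (simp_all add: sigmaC_def)

lemma less4: "(i::nat) < 4 \<Longrightarrow> i = 0 \<or> i = 1 \<or> i = 2 \<or> i = 3" by arith

lemma TS_iff: "f \<in> transform_space 2 sigmaC (init_joint_space v1) \<longleftrightarrow>
   f \<in> omega 2 \<and> (\<exists>c0 c1. f 0 = c0 * v1 0 - c1 \<and> f 1 = c0 * v1 1 \<and> f 2 = c1 \<and> f 3 = c0 * v1 1)"
proof -
  have "(mat_vec 2 (\<lambda>i j. sigmaC j i) f = (\<lambda>i. c0 * vec4 (v1 0) (v1 1) 0 0 i + c1 * vec4 0 0 1 0 i))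
     \<longleftrightarrow> (f 0 = c0 * v1 0 - c1 \<and> f 1 = c0 * v1 1 \<and> f 2 = c1 \<and> f 3 = c0 * v1 1)" for c0 c1
  proof
    assume h: "mat_vec 2 (\<lambda>i j. sigmaC j i) f = (\<lambda>i. c0 * vec4 (v1 0) (v1 1) 0 0 i + c1 * vec4 0 0 1 0 i)"
    have "mat_vec 2 (\<lambda>i j. sigmaC j i) f i = c0 * vec4 (v1 0) (v1 1) 0 0 i + c1 * vec4 0 0 1 0 i" for i
      using h by simp
    from this[of 0] this[of 1] this[of 2] this[of 3]
    show "f 0 = c0 * v1 0 - c1 \<and> f 1 = c0 * v1 1 \<and> f 2 = c1 \<and> f 3 = c0 * v1 1"
      by (simp add: mv2 sig vec4_def algebra_simps)
  next
    assume h: "f 0 = c0 * v1 0 - c1 \<and> f 1 = c0 * v1 1 \<and> f 2 = c1 \<and> f 3 = c0 * v1 1"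
    show "mat_vec 2 (\<lambda>i j. sigmaC j i) f = (\<lambda>i. c0 * vec4 (v1 0) (v1 1) 0 0 i + c1 * vec4 0 0 1 0 i)"
    proof
      fix i :: nat
      show "mat_vec 2 (\<lambda>i j. sigmaC j i) f i = c0 * vec4 (v1 0) (v1 1) 0 0 i + c1 * vec4 0 0 1 0 i"
      proof (cases "i < 4")
        case True
        then show ?thesis using h by (auto dest!: less4 simp: mv2 sig vec4_def algebra_simps)
      next
        case False
        then show ?thesis by (simp add: mv2' vec4_def)
      qed
    qed
  qed
  then show ?thesis
    unfolding transform_space_def init_joint_space_def gen_span2 by auto
qed

lemma TV: "transform_vec 2 sigmaC (init_joint_vec v) = vec4 (v 0) (v 1) (v 0) 0"
proof
  fix i :: nat
  show "transform_vec 2 sigmaC (init_joint_vec v) i = vec4 (v 0) (v 1) (v 0) 0 i"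
    unfolding transform_vec_def init_joint_vec_def
    by (cases "i < 4") (auto dest!: less4 simp: mv2 mv2' sig vec4_def)
qed

lemma perpTS: "x \<in> perp 2 (transform_space 2 sigmaC (init_joint_space v1)) \<longleftrightarrow>
   x \<in> omega 2 \<and> x 2 = x 0 \<and> v1 0 * x 0 + v1 1 * x 1 + v1 1 * x 3 = 0"
proof
  assume h: "x \<in> perp 2 (transform_space 2 sigmaC (init_joint_space v1))"
  have o1: "vec4 (-1) 0 1 0 \<in> transform_space 2 sigmaC (init_joint_space v1)"
    unfolding TS_iff
  proof
    show "vec4 (-1) 0 1 0 \<in> omega 2" by (simp add: omega_iff vec4_def)
    show "\<exists>c0 c1. vec4 (-1) 0 1 0 0 = c0 * v1 0 - c1 \<and> vec4 (-1) 0 1 0 1 = c0 * v1 1 \<and>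
      vec4 (-1) (0::'a) 1 0 2 = c1 \<and> vec4 (-1) 0 1 0 3 = c0 * v1 1"
      by (rule exI[of _ 0], rule exI[of _ 1]) (simp add: vec4_def)
  qed
  have o2: "vec4 (v1 0) (v1 1) 0 (v1 1) \<in> transform_space 2 sigmaC (init_joint_space v1)"
    unfolding TS_iff
  proof
    show "vec4 (v1 0) (v1 1) 0 (v1 1) \<in> omega 2" by (simp add: omega_iff vec4_def)
    show "\<exists>c0 c1. vec4 (v1 0) (v1 1) 0 (v1 1) 0 = c0 * v1 0 - c1 \<and> vec4 (v1 0) (v1 1) 0 (v1 1) 1 = c0 * v1 1 \<and>
      vec4 (v1 0) (v1 1) 0 (v1 1) 2 = c1 \<and> vec4 (v1 0) (v1 1) 0 (v1 1) 3 = c0 * v1 1"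
      by (rule exI[of _ 1], rule exI[of _ 0]) (simp add: vec4_def)
  qed
  from h o1 o2 show "x \<in> omega 2 \<and> x 2 = x 0 \<and> v1 0 * x 0 + v1 1 * x 1 + v1 1 * x 3 = 0"
    by (auto simp: perp_mem obs2 vec4_def algebra_simps)
next
  assume h: "x \<in> omega 2 \<and> x 2 = x 0 \<and> v1 0 * x 0 + v1 1 * x 1 + v1 1 * x 3 = 0"
  show "x \<in> perp 2 (transform_space 2 sigmaC (init_joint_space v1))"
    unfolding perp_mem
  proof (intro conjI ballI)
    show "x \<in> omega 2" using h by simp
    fix f assume "f \<in> transform_space 2 sigmaC (init_joint_space v1)"
    then obtain c0 c1 where e0: "f 0 = c0 * v1 0 - c1" and e1: "f 1 = c0 * v1 1" and e2: "f 2 = c1"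
       and e3: "f 3 = c0 * v1 1"
      unfolding TS_iff by blast
    have "obs_val 2 f x = (c0 * v1 0 - c1) * x 0 + (c0 * v1 1) * x 1 + c1 * x 2 + (c0 * v1 1) * x 3"
      unfolding obs2 e0 e1 e2 e3 by (rule refl)
    also have "\<dots> = c0 * (v1 0 * x 0 + v1 1 * x 1 + v1 1 * x 3) + c1 * (x 2 - x 0)"
      by (simp add: algebra_simps)
    finally have "obs_val 2 f x = c0 * (v1 0 * x 0 + v1 1 * x 1 + v1 1 * x 3) + c1 * (x 2 - x 0)" .
    then show "obs_val 2 f x = 0" using h by simp
  qed
qed


lemma part1:
  assumes "m \<in> compat 2 (transform_space 2 sigmaC (init_joint_space v1)) (transform_vec 2 sigmaC (init_joint_vec v))"
  shows "m 2 = m 0"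
  using assms unfolding compat_mem perpTS TV by (simp add: vec4_def)

lemma LHS:
  "trace_rest 1 (compat 2 (transform_space 2 sigmaC (init_joint_space v1)) (transform_vec 2 sigmaC (init_joint_vec v)))
   = {m \<in> omega 1. \<exists>t. v1 0 * (m 0 - v 0) + v1 1 * t = 0}"
proof (rule set_eqI, rule iffI)
  fix m assume "m \<in> trace_rest 1 (compat 2 (transform_space 2 sigmaC (init_joint_space v1)) (transform_vec 2 sigmaC (init_joint_vec v)))"
  then obtain y where y: "y \<in> compat 2 (transform_space 2 sigmaC (init_joint_space v1)) (transform_vec 2 sigmaC (init_joint_vec v))"
    and m: "m = (\<lambda>i. if i < 2 then y i else 0)"
    unfolding trace_rest_def by auto
  from y have h: "v1 0 * (y 0 - v 0) + v1 1 * (y 1 - v 1) + v1 1 * y 3 = 0"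
    unfolding compat_mem perpTS TV by (simp add: vec4_def)
  have "v1 0 * (m 0 - v 0) + v1 1 * (y 1 - v 1 + y 3) = 0"
    using h unfolding m by (simp add: algebra_simps)
  moreover have "m \<in> omega 1" unfolding m omega_iff by simp
  ultimately show "m \<in> {m \<in> omega 1. \<exists>t. v1 0 * (m 0 - v 0) + v1 1 * t = 0}" by blast
next
  fix m assume "m \<in> {m \<in> omega 1. \<exists>t. v1 0 * (m 0 - v 0) + v1 1 * t = 0}"
  then obtain t where mo: "m \<in> omega 1" and t: "v1 0 * (m 0 - v 0) + v1 1 * t = 0" by blast
  define y where "y = vec4 (m 0) (m 1) (m 0) (t - (m 1 - v 1))"
  have "y \<in> compat 2 (transform_space 2 sigmaC (init_joint_space v1)) (transform_vec 2 sigmaC (init_joint_vec v))"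
    unfolding compat_mem perpTS TV using t by (simp add: vec4_def y_def omega_iff algebra_simps)
  moreover have "m = (\<lambda>i. if i < 2 then y i else 0)"
  proof
    fix i show "m i = (if i < 2 then y i else 0)"
      using mo by (cases "i < 2") (auto simp: y_def vec4_def omega_iff less_2_cases_iff)
  qed
  ultimately show "m \<in> trace_rest 1 (compat 2 (transform_space 2 sigmaC (init_joint_space v1)) (transform_vec 2 sigmaC (init_joint_vec v)))"
    unfolding trace_rest_def by auto
qed


lemma perpPi: "x \<in> perp 1 (gen_span [vec2 1 0]) \<longleftrightarrow> x \<in> omega 1 \<and> x 0 = 0"
proof -
  have "(\<forall>f\<in>gen_span [vec2 1 0]. obs_val 1 f x = 0) \<longleftrightarrow> x 0 = 0"
  proof
    assume "\<forall>f\<in>gen_span [vec2 1 0]. obs_val 1 f x = 0"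
    then have "obs_val 1 (\<lambda>i. 1 * vec2 1 0 i) x = 0" unfolding gen_span1 by blast
    then show "x 0 = 0" by (simp add: obs1 obs1s vec2_def)
  qed (auto simp: gen_span1 obs1 obs1s vec2_def)
  then show ?thesis by (simp add: perp_mem)
qed

lemma perpV: "x \<in> perp 1 (gen_span [v1]) \<longleftrightarrow> x \<in> omega 1 \<and> v1 0 * x 0 + v1 1 * x 1 = 0"
proof -
  have "(\<forall>f\<in>gen_span [v1]. obs_val 1 f x = 0) \<longleftrightarrow> v1 0 * x 0 + v1 1 * x 1 = 0"
  proof
    assume "\<forall>f\<in>gen_span [v1]. obs_val 1 f x = 0"
    then have "obs_val 1 (\<lambda>i. 1 * v1 i) x = 0" unfolding gen_span1 by blast
    then show "v1 0 * x 0 + v1 1 * x 1 = 0" by (simp add: obs1 obs1s)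
  next
    assume h: "v1 0 * x 0 + v1 1 * x 1 = 0"
    show "\<forall>f\<in>gen_span [v1]. obs_val 1 f x = 0"
    proof
      fix f assume "f \<in> gen_span [v1]"
      then obtain c where f: "f = (\<lambda>i. c * v1 i)" unfolding gen_span1 by blast
      have "obs_val 1 f x = c * (v1 0 * x 0 + v1 1 * x 1)" unfolding f obs1 obs1s by (simp add: algebra_simps)
      then show "obs_val 1 f x = 0" using h by simp
    qed
  qed
  then show ?thesis by (simp add: perp_mem)
qed

lemma self_compat: "m \<in> omega n \<Longrightarrow> m \<in> compat n W m"
  unfolding compat_mem perp_mem by (simp add: omega_iff obs_val_def)

lemma compat_mono: "m \<in> compat n V v \<Longrightarrow> W \<subseteq> V \<Longrightarrow> m \<in> compat n W v"
  unfolding compat_mem perp_mem by blast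

lemma RHS:
  assumes fld: "\<forall>x::'a. x \<noteq> 0 \<longrightarrow> (\<exists>y. x * y = 1)" and vo: "(v::nat \<Rightarrow> 'a::comm_ring_1) \<in> omega 1"
  shows "mixture_post_meas 1 (gen_span [vec2 1 0]) (gen_span [v1]) v
       = {m \<in> omega 1. \<exists>t. v1 0 * (m 0 - v 0) + v1 1 * t = 0}"
proof (rule set_eqI, rule iffI)
  fix m assume "m \<in> mixture_post_meas 1 (gen_span [vec2 1 0]) (gen_span [v1]) v"
  then obtain vpi v' where vpi: "vpi \<in> possible_outcomes 1 (gen_span [vec2 1 0]) (gen_span [v1]) v"
    and v'1: "v' \<in> compat 1 (gen_span [vec2 1 0]) vpi"
    and mc: "m \<in> compat 1 (ssum (gen_span [vec2 1 0]) (commuting_part 1 (gen_span [v1]) (gen_span [vec2 1 0]))) v'"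
    unfolding mixture_post_meas_def post_meas_compat_def by blast
  from vpi obtain p where vpio: "vpi \<in> omega 1" and p1: "p \<in> compat 1 (gen_span [vec2 1 0]) vpi"
    and p2: "p \<in> compat 1 (gen_span [v1]) v"
    unfolding possible_outcomes_def by blast
  have e1: "p 0 = vpi 0" using p1 unfolding compat_mem perpPi by simp
  have e2: "v1 0 * (p 0 - v 0) + v1 1 * (p 1 - v 1) = 0" using p2 unfolding compat_mem perpV by simp
  have e3: "v' 0 = vpi 0" and v'o: "v' \<in> omega 1"
    using v'1 vpio unfolding compat_mem perpPi by (auto simp: omega_iff)
  have z: "vec2 1 0 \<in> ssum (gen_span [vec2 1 0]) (commuting_part 1 (gen_span [v1]) (gen_span [vec2 1 0]))"
  proof -
    have a: "vec2 1 0 \<in> gen_span [vec2 (1::'a) 0]" unfolding gen_span1 by (auto intro!: exI[of _ 1])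
    have b: "(\<lambda>i. 0) \<in> commuting_part 1 (gen_span [v1]) (gen_span [vec2 1 0])"
      unfolding commuting_part_def gen_span1 by (auto simp: pb1 pb1s intro!: exI[of _ 0])
    show ?thesis unfolding ssum_def using a b
      by (intro CollectI exI[of _ "vec2 (1::'a) 0"] exI[of _ "\<lambda>i. 0::'a"]) simp
  qed
  have "(\<lambda>i. m i - v' i) \<in> perp 1 (ssum (gen_span [vec2 1 0]) (commuting_part 1 (gen_span [v1]) (gen_span [vec2 1 0])))"
    using mc by (simp add: compat_mem)
  then have e4: "m 0 = v' 0" and mo: "m \<in> omega 1" using z v'o unfolding perp_mem
    by (auto simp: obs1 obs1s vec2_def omega_iff)
  have "v1 0 * (m 0 - v 0) + v1 1 * (p 1 - v 1) = 0" using e1 e2 e3 e4 by simp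
  then show "m \<in> {m \<in> omega 1. \<exists>t. v1 0 * (m 0 - v 0) + v1 1 * t = 0}" using mo by blast
next
  fix m assume "m \<in> {m \<in> omega 1. \<exists>t. v1 0 * (m 0 - v 0) + v1 1 * t = 0}"
  then obtain t where mo: "m \<in> omega 1" and t: "v1 0 * (m 0 - v 0) + v1 1 * t = 0" by blast
  have mpi: "m \<in> compat 1 (gen_span [vec2 1 0]) m" using mo by (rule self_compat)
  have mss: "m \<in> compat 1 (ssum (gen_span [vec2 1 0]) (commuting_part 1 (gen_span [v1]) (gen_span [vec2 1 0]))) m"
    using mo by (rule self_compat)
  show "m \<in> mixture_post_meas 1 (gen_span [vec2 1 0]) (gen_span [v1]) v"
  proof (cases "v1 1 = 0")
    case True
    then have mV: "m \<in> compat 1 (gen_span [v1]) v"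
      using t mo vo unfolding compat_mem perpV by (simp add: omega_iff)
    have mcp: "m \<in> compat 1 (commuting_part 1 (gen_span [v1]) (gen_span [vec2 1 0])) v"
      using mV by (rule compat_mono) (auto simp: commuting_part_def)
    have "m \<in> possible_outcomes 1 (gen_span [vec2 1 0]) (gen_span [v1]) v"
      unfolding possible_outcomes_def using mo mpi mV by blast
    then show ?thesis unfolding mixture_post_meas_def post_meas_compat_def
      using mpi mcp mss by blast
  next
    case False
    then obtain bi where bi: "v1 1 * bi = 1" using fld by blast
    define p where "p = vec2 (m 0) (v 1 - v1 0 * (m 0 - v 0) * bi)"
    have "v1 0 * (m 0 - v 0) + v1 1 * (- (v1 0 * (m 0 - v 0) * bi)) = v1 0 * (m 0 - v 0) * (1 - v1 1 * bi)"
      by (simp add: algebra_simps)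
    then have pe: "v1 0 * (m 0 - v 0) + v1 1 * (- (v1 0 * (m 0 - v 0) * bi)) = 0" using bi by simp
    have pV: "p \<in> compat 1 (gen_span [v1]) v"
      unfolding compat_mem perpV using vo pe by (simp add: p_def vec2_def omega_iff)
    have pP: "p \<in> compat 1 (gen_span [vec2 1 0]) m"
      unfolding compat_mem perpPi using mo by (simp add: p_def vec2_def omega_iff)
    have poss: "m \<in> possible_outcomes 1 (gen_span [vec2 1 0]) (gen_span [v1]) v"
      unfolding possible_outcomes_def using mo pV pP by blast
    have cp0: "f = (\<lambda>i. 0)" if "f \<in> commuting_part 1 (gen_span [v1]) (gen_span [vec2 1 0])" for f
    proof -
      from that obtain c where f: "f = (\<lambda>i. c * v1 i)" and
        br: "\<forall>g\<in>gen_span [vec2 1 0]. pbracket 1 f g = 0"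
        unfolding commuting_part_def gen_span1 by blast
      have "(\<lambda>i. 1 * vec2 1 0 i) \<in> gen_span [vec2 (1::'a) 0]" unfolding gen_span1 by blast
      with br have "pbracket 1 f (\<lambda>i. 1 * vec2 1 0 i) = 0" by blast
      then have "c * v1 1 = 0" unfolding f pb1 pb1s by (simp add: vec2_def)
      then have "c * v1 1 * bi = 0" by simp
      then have "c = 0" using bi by (simp add: mult.assoc)
      then show ?thesis using f by simp
    qed
    have mcp: "m \<in> compat 1 (commuting_part 1 (gen_span [v1]) (gen_span [vec2 1 0])) v"
      unfolding compat_mem perp_mem
    proof (intro conjI ballI)
      show "(\<lambda>i. m i - v i) \<in> omega 1" using mo vo by (simp add: omega_iff)
      fix f assume "f \<in> commuting_part 1 (gen_span [v1]) (gen_span [vec2 1 0])"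
      then have "f = (\<lambda>i. 0)" by (rule cp0)
      then show "obs_val 1 f (\<lambda>i. m i - v i) = 0" by (simp add: obs_val_def)
    qed
    show ?thesis unfolding mixture_post_meas_def post_meas_compat_def
      using poss mpi mcp mss by blast
  qed
qed

theorem theorem4:
  fixes v1 v :: "nat \<Rightarrow> 'a::comm_ring_1"
  assumes "v1 \<in> omega 1" and "v \<in> omega 1"
  shows "(\<forall>m \<in> compat 2 (transform_space 2 sigmaC (init_joint_space v1))
                       (transform_vec 2 sigmaC (init_joint_vec v)). m 2 = m 0)
       \<and> ((\<forall>x::'a. x \<noteq> 0 \<longrightarrow> (\<exists>y. x * y = 1)) \<longrightarrow>
           trace_rest 1 (compat 2 (transform_space 2 sigmaC (init_joint_space v1))
                                  (transform_vec 2 sigmaC (init_joint_vec v)))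
           = mixture_post_meas 1 (gen_span [vec2 1 0]) (gen_span [v1]) v)"
proof (intro conjI impI ballI)
  fix m assume "m \<in> compat 2 (transform_space 2 sigmaC (init_joint_space v1))
                       (transform_vec 2 sigmaC (init_joint_vec v))"
  then show "m 2 = m 0" by (rule part1)
next
  assume "\<forall>x::'a. x \<noteq> 0 \<longrightarrow> (\<exists>y. x * y = 1)"
  then show "trace_rest 1 (compat 2 (transform_space 2 sigmaC (init_joint_space v1))
                                  (transform_vec 2 sigmaC (init_joint_vec v)))
           = mixture_post_meas 1 (gen_span [vec2 1 0]) (gen_span [v1]) v"
    by (simp only: LHS RHS[OF _ assms(2)])
qed

end
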